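(* Assume that \[ \sum_{i\geq j\geq 0}2^{-(i+j)}h_{i,j}(t)\geq 1/2 \] for all integers $t\geq 1$. Then $\tilde c_t\leq 1/2\leq c_t$ holds for all integers $t\geq 1$.
   Context: $s(n)$ denotes the binary sum of digits of $n\ge0$. For $t\ge0$, $c_t$ (resp. $\tilde c_t$) is the asymptotic density of $\{n\ge0: s(n+t)\ge s(n)\}$ (resp. $\{n\ge 0: s(n+t)>s(n)\}$). A hyperbinary expansion of a nonnegative integer $n$ is a sequence $(\varepsilon_{\nu-1},\ldots,\varepsilon_0)\in \{0,1,2\}^{\nu}$ ($\nu\ge0$) with $\sum_{0\leq i<\nu}\varepsilon_i2^i=n$; it is proper if $\nu=0$ or $\varepsilon_{\nu-1}\neq 0$. For $i,j\ge0$ and $t\ge1$, $h_{i,j}(t)$ is the number of proper hyperbinary expansions of $t-1$ having exactly $i$ digits equal to $2$ and exactly $j$ digits equal to $0$. *)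

theory Defs
  imports "HOL-Analysis.Analysis"
begin

fun bsum :: "nat \<Rightarrow> nat" where
  "bsum n = (if n = 0 then 0 else n mod 2 + bsum (n div 2))"

definition asymp_density :: "nat set \<Rightarrow> real" where
  "asymp_density A = lim (\<lambda>N. real (card {n\<in>A. n < N}) / real N)"

definition c_t :: "nat \<Rightarrow> real" where
  "c_t t = asymp_density {n. bsum (n + t) \<ge> bsum n}"

definition c_tilde :: "nat \<Rightarrow> real" where
  "c_tilde t = asymp_density {n. bsum (n + t) > bsum n}"

text \<open>Hyperbinary expansions: digit lists, least significant digit first,
  so the list [e_0, ..., e_(nu-1)] represents the sequence (e_(nu-1),...,e_0).\<close>
definition hb_value :: "nat list \<Rightarrow> nat" where
  "hb_value es = (\<Sum>i<length es. es ! i * 2 ^ i)"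

definition proper_hyperbinary :: "nat \<Rightarrow> nat list \<Rightarrow> bool" where
  "proper_hyperbinary n es \<longleftrightarrow>
     set es \<subseteq> {0, 1, 2} \<and> hb_value es = n \<and> (es = [] \<or> last es \<noteq> 0)"

definition h :: "nat \<Rightarrow> nat \<Rightarrow> nat \<Rightarrow> nat" where
  "h i j t = card {es. proper_hyperbinary (t - 1) es \<and>
                       count_list es 2 = i \<and> count_list es 0 = j}"

end

theory Submission
  imports Defs
begin


lemma hb_value_Nil[simp]: "hb_value [] = 0" by (simp add: hb_value_def)

lemma hb_value_Cons[simp]: "hb_value (e # es) = e + 2 * hb_value es"
proof -
  have "hb_value (e # es) = (\<Sum>i<Suc (length es). (e # es) ! i * 2 ^ i)"
    by (simp add: hb_value_def)
  also have "\<dots> = e + (\<Sum>i<length es. (e # es) ! Suc i * 2 ^ Suc i)"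
    by (subst sum.lessThan_Suc_shift) simp
  also have "\<dots> = e + 2 * hb_value es"
    by (simp add: hb_value_def sum_distrib_left mult.assoc mult.left_commute)
  finally show ?thesis .
qed

lemma proper_Nil: "proper_hyperbinary n [] \<longleftrightarrow> n = 0"
  by (auto simp: proper_hyperbinary_def)

lemma proper_Cons: "proper_hyperbinary n (e # es) \<longleftrightarrow>
   e \<le> 2 \<and> n = e + 2 * hb_value es \<and> proper_hyperbinary (hb_value es) es \<and> (es = [] \<longrightarrow> e \<noteq> 0)"
  by (cases es) (auto simp: proper_hyperbinary_def)

definition HExp :: "nat \<Rightarrow> nat list set" where
  "HExp n = {es. proper_hyperbinary n es}"

lemma proper_zero: "proper_hyperbinary 0 es \<Longrightarrow> es = []"
proof (induction es)
  case (Cons e es)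
  then show ?case by (auto simp: proper_Cons)
qed simp

lemma HExp_0: "HExp 0 = {[]}"
  using proper_zero by (auto simp: HExp_def proper_Nil)

lemma HExp_odd: "HExp (2 * v+1) = (Cons 1) ` HExp v"
proof (intro equalityI subsetI)
  fix es assume "es \<in> HExp (2 * v+1)"
  then have p: "proper_hyperbinary (2 * v+1) es" by (simp add: HExp_def)
  then obtain e es' where es: "es = e # es'" by (cases es) (auto simp: proper_Nil)
  with p have "e \<le> 2" "2 * v+1 = e + 2 * hb_value es'" "proper_hyperbinary (hb_value es') es'"
    by (auto simp: proper_Cons)
  then have "e = 1" "hb_value es' = v" by presburger+
  then show "es \<in> (Cons 1) ` HExp v" using es \<open>proper_hyperbinary (hb_value es') es'\<close>
    by (auto simp: HExp_def)
next
  fix es assume "es \<in> (Cons 1) ` HExp v"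
  then obtain es' where "es = 1 # es'" "proper_hyperbinary v es'" by (auto simp: HExp_def)
  moreover have "hb_value es' = v" using \<open>proper_hyperbinary v es'\<close> by (simp add: proper_hyperbinary_def)
  ultimately show "es \<in> HExp (2 * v+1)" by (auto simp: HExp_def proper_Cons)
qed

lemma HExp_even: assumes "v \<ge> 1" shows "HExp (2 * v) = (Cons 0) ` HExp v \<union> (Cons 2) ` HExp (v - 1)"
proof (intro equalityI subsetI)
  fix es assume "es \<in> HExp (2 * v)"
  then have p: "proper_hyperbinary (2 * v) es" by (simp add: HExp_def)
  then obtain e es' where es: "es = e # es'" using assms by (cases es) (auto simp: proper_Nil)
  with p have h: "e \<le> 2" "2 * v = e + 2 * hb_value es'" "proper_hyperbinary (hb_value es') es'"
    by (auto simp: proper_Cons)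
  then have "(e = 0 \<and> hb_value es' = v) \<or> (e = 2 \<and> hb_value es' = v - 1)" by presburger
  then show "es \<in> (Cons 0) ` HExp v \<union> (Cons 2) ` HExp (v - 1)" using es h(3)
    by (auto simp: HExp_def)
next
  fix es assume "es \<in> (Cons 0) ` HExp v \<union> (Cons 2) ` HExp (v - 1)"
  then show "es \<in> HExp (2 * v)"
  proof
    assume "es \<in> (Cons 0) ` HExp v"
    then obtain es' where "es = 0 # es'" "proper_hyperbinary v es'" by (auto simp: HExp_def)
    moreover have "hb_value es' = v" using \<open>proper_hyperbinary v es'\<close> by (simp add: proper_hyperbinary_def)
    ultimately show ?thesis using assms by (auto simp: HExp_def proper_Cons)
  next
    assume "es \<in> (Cons 2) ` HExp (v - 1)"
    then obtain es' where "es = 2 # es'" "proper_hyperbinary (v-1) es'" by (auto simp: HExp_def)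
    moreover have "hb_value es' = v - 1" using \<open>proper_hyperbinary (v-1) es'\<close> by (simp add: proper_hyperbinary_def)
    ultimately show ?thesis using assms by (auto simp: HExp_def proper_Cons)
  qed
qed

lemma finite_HExp: "finite (HExp n)"
proof (induction n rule: less_induct)
  case (less n)
  show ?case
  proof (cases "n = 0")
    case True then show ?thesis by (simp add: HExp_0)
  next
    case False
    show ?thesis
    proof (cases "even n")
      case True
      then obtain v where v: "n = 2 * v" by blast
      with False have "v \<ge> 1" by simp
      have "v < n" "v - 1 < n" using v \<open>v \<ge> 1\<close> by auto
      then show ?thesis using less v HExp_even[OF \<open>v \<ge> 1\<close>] by simp
    next
      case odd: False
      then obtain v where v: "n = 2 * v+1" using oddE by blast
      then have "v < n" by simp
      then show ?thesis using less v HExp_odd by simp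
    qed
  qed
qed

definition ww :: "nat list \<Rightarrow> real" where
  "ww es = (1/2) ^ (count_list es 2 + count_list es 0)"
definition dd :: "nat list \<Rightarrow> int" where
  "dd es = int (count_list es 2) - int (count_list es 0)"
definition BB :: "nat \<Rightarrow> int \<Rightarrow> real" where
  "BB n k = (\<Sum>es\<in>HExp n. if k \<le> dd es then ww es else 0)"

lemma ww_Cons1[simp]: "ww (Suc 0 # x) = ww x" by (simp add: ww_def)
lemma ww_Cons0[simp]: "ww (0 # x) = ww x / 2" by (simp add: ww_def)
lemma ww_Cons2[simp]: "ww (2 # x) = ww x / 2" by (simp add: ww_def)

lemma BB_0: "BB 0 k = (if k \<le> 0 then 1 else 0)"
  by (simp add: BB_def HExp_0 dd_def ww_def)

lemma BB_odd: "BB (2 * v+1) k = BB v k"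
  unfolding BB_def HExp_odd
  apply (subst sum.reindex)
   apply (simp add: inj_on_def)
  apply (rule sum.cong, simp)
  apply (simp add: dd_def ww_def)
  done

lemma BB_even: assumes "v \<ge> 1" shows "BB (2 * v) k = BB v (k+1) / 2 + BB (v-1) (k-1) / 2"
proof -
  have d: "(Cons 0) ` HExp v \<inter> (Cons 2) ` HExp (v - 1) = {}" by auto
  have "BB (2 * v) k = (\<Sum>es\<in>(Cons 0) ` HExp v. if k \<le> dd es then ww es else 0)
     + (\<Sum>es\<in>(Cons 2) ` HExp (v-1). if k \<le> dd es then ww es else 0)"
    unfolding BB_def HExp_even[OF assms] by (rule sum.union_disjoint) (auto simp: finite_HExp)
  also have "\<dots> = (\<Sum>es\<in>HExp v. if k+1 \<le> dd es then ww es / 2 else 0)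
     + (\<Sum>es\<in>HExp (v-1). if k - 1 \<le> dd es then ww es / 2 else 0)"
    by (subst (1 2) sum.reindex) (auto simp: inj_on_def dd_def intro!: sum.cong arg_cong2[where f="(+)"])
  also have "\<dots> = BB v (k+1) / 2 + BB (v-1) (k-1) / 2"
    unfolding BB_def sum_divide_distrib by (auto intro!: sum.cong arg_cong2[where f="(+)"])
  finally show ?thesis .
qed

lemma BB_le1_0: "BB 0 k \<le> 1" by (simp add: BB_0)



lemma h_card: "h i j T = card {es \<in> HExp (T-1). (count_list es 2, count_list es 0) = (i,j)}"
  unfolding h_def HExp_def by (rule arg_cong[where f=card]) auto

lemma infsum_BB:
  "(\<Sum>\<^sub>\<infinity>(i, j)\<in>{(i, j). j \<le> i}. real (h i j T) / 2 ^ (i + j)) = BB (T-1) 0"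
proof -
  define S where "S = HExp (T-1)"
  define key where "key = (\<lambda>es::nat list. (count_list es 2, count_list es 0))"
  define F where "F = key ` S"
  define D where "D = {(i::nat, j::nat). j \<le> i}"
  define g where "g = (\<lambda>(i::nat, j::nat). real (h i j T) / 2 ^ (i + j))"
  have fS: "finite S" by (simp add: S_def finite_HExp)
  have fF: "finite F" by (simp add: F_def fS)
  have hk: "h i j T = card {es \<in> S. key es = (i,j)}" for i j
    by (simp add: h_card S_def key_def)
  have g0: "g y = 0" if "y \<notin> F" for y
  proof -
    obtain i j where y: "y = (i,j)" by (cases y)
    have "{es \<in> S. key es = (i,j)} = {}" using that y unfolding F_def by (metis (mono_tags, lifting) empty_Collect_eq image_eqI)
    then have "h i j T = 0" unfolding hk by (metis card.empty)
    then show ?thesis by (simp add: g_def y)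
  qed
  have "(\<Sum>\<^sub>\<infinity>(i, j)\<in>{(i, j). j \<le> i}. real (h i j T) / 2 ^ (i + j)) = infsum g D"
    by (simp add: g_def D_def)
  also have "\<dots> = infsum g (D \<inter> F)"
    by (rule infsum_cong_neutral) (auto simp: g0)
  also have "\<dots> = sum g (D \<inter> F)" using fF by simp
  also have "\<dots> = (\<Sum>y\<in>F. if y \<in> D then g y else 0)"
    using fF by (simp add: sum.inter_filter[symmetric] Int_commute Int_def conj_commute)
  also have "\<dots> = (\<Sum>y\<in>F. \<Sum>es\<in>{es\<in>S. key es = y}. if 0 \<le> dd es then ww es else 0)"
  proof (rule sum.cong[OF refl])
    fix y assume "y \<in> F"
    obtain i j where y: "y = (i,j)" by (cases y)
    have fin: "finite {es\<in>S. key es = y}" using fS by simp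
    have "(\<Sum>es\<in>{es\<in>S. key es = y}. if 0 \<le> dd es then ww es else 0)
        = (\<Sum>es\<in>{es\<in>S. key es = y}. if j \<le> i then (1/2) ^ (i+j) else 0)"
      by (rule sum.cong) (auto simp: y key_def dd_def ww_def)
    also have "\<dots> = (if y \<in> D then g y else 0)"
      by (simp add: y D_def g_def hk power_one_over)
    finally show "(if y \<in> D then g y else 0) =
       (\<Sum>es\<in>{es\<in>S. key es = y}. if 0 \<le> dd es then ww es else 0)" by simp
  qed
  also have "\<dots> = (\<Sum>es\<in>S. if 0 \<le> dd es then ww es else 0)"
    by (rule sum.group) (auto simp: fS fF F_def)
  also have "\<dots> = BB (T-1) 0" by (simp add: BB_def S_def)
  finally show ?thesis .
qed



declare bsum.simps[simp del]

lemma bsum_rec: "bsum n = n mod 2 + bsum (n div 2)"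
  by (cases "n = 0") (simp_all add: bsum.simps[of n] bsum.simps[of 0])

lemma bsum_even[simp]: "bsum (2 * m) = bsum m"
  by (subst bsum_rec) simp
lemma bsum_odd[simp]: "bsum (2 * m + 1) = bsum m + 1"
  by (subst bsum_rec) simp

lemma bsum_zero[simp]: "bsum 0 = 0" by (simp add: bsum.simps)
lemma bsum_one[simp]: "bsum (Suc 0) = 1" using bsum_odd[of 0] by simp

definition DD :: "nat \<Rightarrow> nat \<Rightarrow> int" where
  "DD t r = int (bsum (r + t)) - int (bsum r)"

lemma DD_ee: "DD (2 * w) (2 * q) = DD w q"
proof -
  have "2 * q + 2 * w = 2 * (q + w)" by simp
  then show ?thesis unfolding DD_def by (simp only: bsum_even)
qed
lemma DD_eo: "DD (2 * w) (2 * q + 1) = DD w q"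
proof -
  have "2 * q + 1 + 2 * w = 2 * (q + w) + 1" by simp
  then show ?thesis unfolding DD_def by (simp only: bsum_even bsum_odd)
qed
lemma DD_oe: "DD (2 * w + 1) (2 * q) = DD w q + 1"
proof -
  have "2 * q + (2 * w + 1) = 2 * (q + w) + 1" by simp
  then show ?thesis unfolding DD_def by (simp only: bsum_even bsum_odd)
qed
lemma DD_oo: "DD (2 * w + 1) (2 * q + 1) = DD (w + 1) q - 1"
proof -
  have "2 * q + 1 + (2 * w + 1) = 2 * (q + (w + 1))" by simp
  then show ?thesis unfolding DD_def by (simp only: bsum_even bsum_odd)
qed

lemma sum_split2: "(\<Sum>r<2 * (m::nat). g r) = (\<Sum>q<m. g (2 * q) + g (2 * q + 1))"
  by (induction m) (simp_all add: add.assoc)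

definition AA :: "nat \<Rightarrow> nat \<Rightarrow> int \<Rightarrow> real" where
  "AA L t k = (\<Sum>r<2^L. if k \<le> DD t r then 1 else 0)"
definition AA' :: "nat \<Rightarrow> nat \<Rightarrow> int \<Rightarrow> real" where
  "AA' L t k = (\<Sum>r<2^L. if DD t r \<le> k then 1 else 0)"

lemma AA_even: "AA (Suc L) (2 * w) k = 2 * AA L w k"
  unfolding AA_def power_Suc sum_split2 DD_ee DD_eo by (simp add: sum_distrib_left)
lemma AA_odd: "AA (Suc L) (2 * w + 1) k = AA L w (k - 1) + AA L (w + 1) (k + 1)"
  unfolding AA_def power_Suc sum_split2 DD_oe DD_oo sum.distrib
  by (intro arg_cong2[where f="(+)"] sum.cong) auto
lemma AA'_even: "AA' (Suc L) (2 * w) k = 2 * AA' L w k"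
  unfolding AA'_def power_Suc sum_split2 DD_ee DD_eo by (simp add: sum_distrib_left)
lemma AA'_odd: "AA' (Suc L) (2 * w + 1) k = AA' L w (k - 1) + AA' L (w + 1) (k + 1)"
  unfolding AA'_def power_Suc sum_split2 DD_oe DD_oo sum.distrib
  by (intro arg_cong2[where f="(+)"] sum.cong) auto

lemma AA'_nonneg: "0 \<le> AA' L t k"
  unfolding AA'_def by (rule sum_nonneg) simp

lemma LA: "t \<le> 2^L \<Longrightarrow> 2^L * BB (2^L + t - 1) k \<le> AA L t k"
proof (induction L arbitrary: t k)
  case 0
  then have "t = 0 \<or> t = 1" by auto
  then show ?case
  proof
    assume "t = 0" then show ?thesis by (simp add: AA_def BB_0 DD_def)
  next
    assume "t = 1"
    have "BB 1 k = BB 0 k" using BB_odd[of 0 k] by simp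
    then show ?thesis using \<open>t = 1\<close> by (simp add: AA_def BB_0 DD_def)
  qed
next
  case (Suc L)
  show ?case
  proof (cases "even t")
    case True
    then obtain w where t: "t = 2 * w" by blast
    with Suc.prems have w: "w \<le> 2^L" by simp
    have p: "(1::nat) \<le> 2^L" by simp
    have e: "2 ^ Suc L + t - 1 = 2 * (2^L + w - 1) + 1"
      using p unfolding t power_Suc by linarith
    show ?thesis using Suc.IH[OF w, of k] unfolding e BB_odd unfolding t AA_even by simp
  next
    case False
    then obtain w where t: "t = 2 * w + 1" using oddE by blast
    with Suc.prems have w1: "w + 1 \<le> 2^L" and w: "w \<le> 2^L" by simp_all
    have e: "2 ^ Suc L + t - 1 = 2 * (2^L + w)" unfolding t power_Suc by simp
    have v: "2^L + w \<ge> 1" by (simp add: Suc_leI)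
    have e2: "2^L + w - 1 = 2^L + w - 1" by simp
    have "2 ^ Suc L * BB (2 ^ Suc L + t - 1) k
        = 2^L * BB (2^L + (w+1) - 1) (k + 1) + 2^L * BB (2^L + w - 1) (k - 1)"
      unfolding e BB_even[OF v] by (simp add: algebra_simps)
    also have "\<dots> \<le> AA L (w+1) (k+1) + AA L w (k - 1)"
      using Suc.IH[OF w1, of "k+1"] Suc.IH[OF w, of "k-1"] by linarith
    also have "\<dots> = AA (Suc L) t k" unfolding t AA_odd by simp
    finally show ?thesis .
  qed
qed

lemma LB: "t < 2^L \<Longrightarrow> 2^L * BB (2^L - t - 1) (- k) - 2 * real t \<le> AA' L t k"
proof (induction L arbitrary: t k)
  case 0
  then have "t = 0" by simp
  then show ?case by (simp add: AA'_def BB_0 DD_def)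
next
  case (Suc L)
  show ?case
  proof (cases "even t")
    case True
    then obtain w where t: "t = 2 * w" by blast
    with Suc.prems have w: "w < 2^L" by simp
    have e: "2 ^ Suc L - t - 1 = 2 * (2^L - w - 1) + 1"
      using w unfolding t power_Suc by linarith
    show ?thesis using Suc.IH[OF w, of k] unfolding e BB_odd unfolding t AA'_even by simp
  next
    case False
    then obtain w where t: "t = 2 * w + 1" using oddE by blast
    with Suc.prems have w: "w < 2^L" by simp
    show ?thesis
    proof (cases "w + 1 < 2^L")
      case True
      define v where "v = 2^L - w - 1"
      have v: "v \<ge> 1" using True unfolding v_def by linarith
      have e: "2 ^ Suc L - t - 1 = 2 * v" using True unfolding t v_def power_Suc by linarith
      have v1: "v - 1 = 2^L - (w+1) - 1" unfolding v_def by linarith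
      have "2 ^ Suc L * BB (2 ^ Suc L - t - 1) (-k) - 2 * real t
          = (2^L * BB (2^L - w - 1) (- (k - 1)) - 2 * real w)
            + (2^L * BB (2^L - (w+1) - 1) (- (k + 1)) - 2 * real (w + 1))"
        unfolding e BB_even[OF v] v1 by (simp add: v_def t algebra_simps) (rule arg_cong[where f="BB _"], simp)
      also have "\<dots> \<le> AA' L w (k - 1) + AA' L (w + 1) (k + 1)"
        using Suc.IH[OF w, of "k-1"] Suc.IH[OF True, of "k+1"] by linarith
      also have "\<dots> = AA' (Suc L) t k" unfolding t AA'_odd by simp
      finally show ?thesis .
    next
      case False
      with w have "w + 1 = 2^L" by simp
      then have tt: "t + 1 = 2 * 2^L" using t by linarith
      then have e: "2 ^ Suc L - t - 1 = 0" by simp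
      have "real (t + 1) = real (2 * 2^L)" using tt by (simp only:)
      then have rt: "real t + 1 = 2 * 2^L" by simp
      have p1: "(1::real) \<le> 2^L" by simp
      have m: "(2::real) ^ L * BB 0 (-k) \<le> 2 ^ L"
        using BB_le1_0[of "-k"] by (simp add: mult_left_le)
      then have "2 ^ Suc L * BB (2 ^ Suc L - t - 1) (-k) - 2 * real t \<le> 0"
        unfolding e unfolding power_Suc mult.assoc using rt p1 m by linarith
      then show ?thesis using AA'_nonneg[of "Suc L" t k] by linarith
    qed
  qed
qed



lemma est_lo: fixes Fv a m q r N :: real
  assumes "m > 0" "q \<ge> 1" "0 \<le> a" "a \<le> m" "0 \<le> r" "r < m" "N = q*m + r" "q*a \<le> Fv"
  shows "a/m - 1/q \<le> Fv/N"
proof -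
  have qm: "q*m \<le> N" using assms by simp
  have Np: "N > 0" using assms by (smt (verit) mult_pos_pos)
  have qr: "q*r \<le> N" using assms qm by (smt (verit) mult_left_mono)
  have k: "a*(q*r) \<le> m*N" using assms qr by (simp add: mult_mono)
  have "a/m - 1/q \<le> q*a/N"
  proof -
    have "a/m - 1/q = (a*q - m)/(m*q)" using assms by (simp add: field_simps)
    also have "\<dots> \<le> q*a/N"
      using assms Np k by (simp add: divide_simps) (simp add: algebra_simps)
    finally show ?thesis .
  qed
  also have "\<dots> \<le> Fv/N" using assms Np by (simp add: divide_right_mono)
  finally show ?thesis .
qed

lemma est_hi: fixes Fv a m q r N t :: real
  assumes "m > 0" "q \<ge> 1" "0 \<le> a" "a \<le> m" "0 \<le> r" "r < m" "N = q*m + r" "Fv \<le> q*(a+t) + r" "t \<ge> 0"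
  shows "Fv/N \<le> a/m + t/m + 1/q"
proof -
  have qm: "q*m \<le> N" using assms by simp
  have qmp: "q*m > 0" using assms by simp
  have Np: "N > 0" using assms by (smt (verit) mult_pos_pos)
  have "Fv/N \<le> (q*(a+t) + r)/N" using assms Np by (simp add: divide_right_mono)
  also have "\<dots> = q*(a+t)/N + r/N" by (simp add: add_divide_distrib)
  also have "q*(a+t)/N \<le> q*(a+t)/(q*m)"
    using assms qm qmp Np by (intro divide_left_mono[OF qm]) (simp_all add: mult_pos_pos)
  also have "q*(a+t)/(q*m) = (a+t)/m" using assms by simp
  also have "r/N \<le> m/(q*m)"
    using assms qm qmp by (intro frac_le) auto
  also have "m/(q*m) = 1/q" using assms by simp
  finally show ?thesis by (simp add: add_divide_distrib)
qed

lemma bsum_block: "r < 2^K \<Longrightarrow> bsum (a * 2^K + r) = bsum a + bsum r"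
proof (induction K arbitrary: r)
  case 0 then show ?case by simp
next
  case (Suc K)
  have x: "a * 2 ^ Suc K + r = r + (a * 2^K) * 2" by simp
  have "bsum (a * 2 ^ Suc K + r) = r mod 2 + bsum (a * 2^K + r div 2)"
    unfolding x by (subst bsum_rec) (simp only: mod_mult_self1 div_mult_self1 zero_neq_numeral add.commute not_False_eq_True)
  also have "\<dots> = r mod 2 + bsum a + bsum (r div 2)"
    using Suc.IH[of "r div 2"] Suc.prems by (simp add: less_mult_imp_div_less)
  also have "\<dots> = bsum a + bsum r" using bsum_rec[of r] by simp
  finally show ?case .
qed

lemma DD_block: "r + t < 2^K \<Longrightarrow> DD t (a * 2^K + r) = DD t r"
  unfolding DD_def using bsum_block[of "r + t" K a] bsum_block[of r K a]
  by (simp add: add.assoc)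

context
  fixes Q :: "int \<Rightarrow> bool" and t :: nat
begin

definition ind :: "nat \<Rightarrow> real" where "ind n = (if Q (DD t n) then 1 else 0)"
definition FF :: "nat \<Rightarrow> real" where "FF N = (\<Sum>n<N. ind n)"

lemma ind_01: "0 \<le> ind n" "ind n \<le> 1" by (simp_all add: ind_def)

lemma FF_card: "real (card {n. Q (DD t n) \<and> n < N}) = FF N"
proof -
  have "FF N = (\<Sum>n<N. of_bool (Q (DD t n)))" by (simp add: FF_def ind_def of_bool_def)
  also have "\<dots> = real (card ({..<N} \<inter> {n. Q (DD t n)}))" by (rule sum_of_bool_eq) auto
  also have "{..<N} \<inter> {n. Q (DD t n)} = {n. Q (DD t n) \<and> n < N}" by auto
  finally show ?thesis by simp
qed

lemma FF_mono: "FF N \<le> FF (N + r) \<and> FF (N + r) \<le> FF N + r"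
  by (induction r) (auto simp: FF_def ind_def)

lemma FF_blocks: "FF (q * m) = (\<Sum>a<q. \<Sum>r<m. ind (a * m + r))"
proof -
  have "FF (q * m) = (\<Sum>a<q. sum ind {a*m..<a*m+m})"
    unfolding FF_def by (rule sum.nat_group[symmetric])
  also have "\<dots> = (\<Sum>a<q. \<Sum>r<m. ind (a * m + r))"
  proof (rule sum.cong[OF refl])
    fix a
    show "sum ind {a*m..<a*m+m} = (\<Sum>r<m. ind (a * m + r))"
      using sum.shift_bounds_nat_ivl[of ind 0 "a*m" m]
      by (simp add: add.commute atLeast0LessThan)
  qed
  finally show ?thesis .
qed

definition alpha :: "nat \<Rightarrow> real" where
  "alpha K = (\<Sum>r<2^K. if r + t < 2^K then ind r else 0)"

lemma alpha_bounds: "0 \<le> alpha K" "alpha K \<le> 2^K"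
proof -
  show "0 \<le> alpha K" unfolding alpha_def by (rule sum_nonneg) (simp add: ind_01)
  have "alpha K \<le> (\<Sum>r<(2::nat)^K. 1)" unfolding alpha_def
    by (rule sum_mono) (simp add: ind_01)
  then show "alpha K \<le> 2^K" by simp
qed

lemma count_carry: "t \<le> m \<Longrightarrow> (\<Sum>r<m. if r + t < m then 0 else 1::real) \<le> real t"
proof -
  assume tm: "t \<le> m"
  have "(\<Sum>r<m. if r + t < m then 0 else 1::real) = (\<Sum>r<m. of_bool (\<not> r + t < m))"
    by (rule sum.cong) (auto simp: of_bool_def)
  also have "\<dots> = real (card ({..<m} \<inter> {r. \<not> r + t < m}))" by (rule sum_of_bool_eq) auto
  also have "card ({..<m} \<inter> {r. \<not> r + t < m}) \<le> card {m - t..<m}"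
    by (rule card_mono) auto
  then have "real (card ({..<m} \<inter> {r. \<not> r + t < m})) \<le> real t" using tm by simp
  finally show ?thesis .
qed

lemma block_bounds:
  assumes "t \<le> 2^K"
  shows "alpha K \<le> (\<Sum>r<2^K. ind (a * 2^K + r))"
    "(\<Sum>r<2^K. ind (a * 2^K + r)) \<le> alpha K + t"
proof -
  have eq: "(\<Sum>r<2^K. ind (a * 2^K + r)) = (\<Sum>r<2^K. if r + t < 2^K then ind r else ind (a * 2^K + r))"
    by (rule sum.cong) (auto simp: ind_def DD_block)
  show "alpha K \<le> (\<Sum>r<2^K. ind (a * 2^K + r))"
    unfolding eq alpha_def by (rule sum_mono) (simp add: ind_01)
  have "(\<Sum>r<2^K. ind (a * 2^K + r)) \<le> (\<Sum>r<(2::nat)^K. (if r + t < 2^K then ind r else 0) + (if r + t < 2^K then 0 else 1))"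
    unfolding eq by (rule sum_mono) (simp add: ind_01)
  also have "\<dots> = alpha K + (\<Sum>r<(2::nat)^K. if r + t < 2^K then 0 else 1)"
    unfolding alpha_def by (simp add: sum.distrib)
  also have "\<dots> \<le> alpha K + t" using count_carry[OF assms] by simp
  finally show "(\<Sum>r<2^K. ind (a * 2^K + r)) \<le> alpha K + t" .
qed

lemma FF_est:
  assumes "t \<le> 2^K" "N \<ge> 2^K"
  shows "\<bar>FF N / N - alpha K / 2^K\<bar> \<le> t / 2^K + 1 / real (N div 2^K)"
proof -
  define m :: nat where "m = 2^K"
  define q where "q = N div m"
  define r where "r = N mod m"
  have m0: "m > 0" by (simp add: m_def)
  have Nqr: "N = q * m + r" by (simp add: q_def r_def)
  have rm: "r < m" using m0 by (simp add: r_def)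
  have q1: "q \<ge> 1" using div_le_mono[OF assms(2), of "2^K"] by (simp add: q_def m_def)
  have lo: "q * alpha K \<le> FF (q * m)"
  proof -
    have "q * alpha K = (\<Sum>a<q. alpha K)" by simp
    also have "\<dots> \<le> FF (q * m)" unfolding FF_blocks m_def
      by (rule sum_mono) (rule block_bounds(1)[OF assms(1)])
    finally show ?thesis .
  qed
  have hi: "FF (q * m) \<le> q * (alpha K + t)"
  proof -
    have "FF (q * m) \<le> (\<Sum>a<q. alpha K + t)" unfolding FF_blocks m_def
      by (rule sum_mono) (rule block_bounds(2)[OF assms(1)])
    also have "\<dots> = q * (alpha K + t)" by simp
    finally show ?thesis .
  qed
  have F1: "FF (q * m) \<le> FF N" "FF N \<le> FF (q * m) + r" using FF_mono[of "q*m" r] Nqr by auto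
  have rN: "real N = real q * real m + real r" using Nqr by simp
  have A: "alpha K / m - 1 / q \<le> FF N / N"
    by (rule est_lo[OF _ _ alpha_bounds(1) _ _ _ rN]) (use m0 q1 rm alpha_bounds(2) lo F1 in \<open>auto simp: m_def\<close>)
  have B: "FF N / N \<le> alpha K / m + t / m + 1 / q"
    by (rule est_hi[OF _ _ alpha_bounds(1) _ _ _ rN]) (use m0 q1 rm alpha_bounds(2) hi F1 in \<open>auto simp: m_def\<close>)
  have mr: "real m = 2^K" by (simp add: m_def)
  have A': "alpha K / 2^K - 1 / real (N div 2^K) \<le> FF N / N" using A unfolding mr unfolding q_def m_def .
  have B': "FF N / N \<le> alpha K / 2^K + t / 2^K + 1 / real (N div 2^K)" using B unfolding mr unfolding q_def m_def .
  have "0 \<le> real t / 2^K" by simp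
  then show ?thesis using A' B' unfolding abs_le_iff by linarith
qed

lemma FF_conv: "convergent (\<lambda>N. FF N / N)"
proof -
  have "Cauchy (\<lambda>N. FF N / N)"
  proof (rule CauchyI)
    fix e :: real assume e: "0 < e"
    obtain n1 :: nat where n1: "max (real t) (4 * t / e) < n1" using reals_Archimedean2 by blast
    define K where "K = n1"
    have "real n1 < real (2^n1)" using less_exp[of n1] by (simp only: of_nat_less_iff)
    then have "real n1 < 2^n1" by simp
    then have Kb: "max (real t) (4 * t / e) < 2^K" using n1 unfolding K_def by linarith
    then have "real t < real (2^K)" by simp
    then have "t < 2^K" by (simp only: of_nat_less_iff)
    then have tK: "t \<le> 2^K" by simp
    have tK2: "t / 2^K < e / 4"
    proof -
      have "4 * t / e < 2^K" using Kb by simp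
      then have "4 * t < 2^K * e" using e by (simp add: divide_less_eq)
      then show ?thesis by (simp add: divide_less_eq mult.commute)
    qed
    obtain Q0 :: nat where Q0: "4 / e < Q0" using reals_Archimedean2 by blast
    have "0 < 4/e" using e by simp
    then have "0 < real Q0" using Q0 by linarith
    then have Q0p: "Q0 > 0" by simp
    have bnd: "\<bar>FF N / N - alpha K / 2^K\<bar> < e / 2" if "N \<ge> Q0 * 2^K" for N
    proof -
      have "1 * 2^K \<le> Q0 * 2^K" using Q0p by (intro mult_le_mono1) simp
      then have N: "N \<ge> 2^K" using that by linarith
      have "Q0 * 2^K div 2^K \<le> N div 2^K" using div_le_mono[OF that, of "2^K"] .
      then have q: "N div 2^K \<ge> Q0" by simp
      have "1 / real (N div 2^K) \<le> 1 / Q0" using q Q0p by (simp add: frac_le)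
      also have "1 / real Q0 < e / 4" using Q0 e Q0p by (simp add: divide_less_eq mult.commute)
      finally have "1 / real (N div 2^K) < e / 4" .
      then show ?thesis using FF_est[OF tK N] tK2 by linarith
    qed
    show "\<exists>M. \<forall>m\<ge>M. \<forall>n\<ge>M. norm (FF m / m - FF n / n) < e"
    proof (intro exI allI impI)
      fix m n assume "Q0 * 2^K \<le> m" "Q0 * 2^K \<le> n"
      with bnd[of m] bnd[of n] show "norm (FF m / m - FF n / n) < e" unfolding real_norm_def abs_less_iff by linarith
    qed
  qed
  then show ?thesis by (simp add: Cauchy_convergent_iff)
qed

end



lemma hypBB:
  assumes H: "\<forall>t::nat. t \<ge> 1 \<longrightarrow>
     (\<Sum>\<^sub>\<infinity>(i, j)\<in>{(i, j). j \<le> i}. real (h i j t) / 2 ^ (i + j)) \<ge> 1 / 2"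
    and T: "T \<ge> 1"
  shows "BB (T - 1) 0 \<ge> 1/2"
proof -
  have "1/2 \<le> (\<Sum>\<^sub>\<infinity>(i, j)\<in>{(i, j). j \<le> i}. real (h i j T) / 2 ^ (i + j))"
    using H T by blast
  then show ?thesis by (simp only: infsum_BB)
qed

lemma sm2: "strict_mono (\<lambda>L::nat. (2::nat)^L)"
  unfolding strict_mono_def by simp

theorem corollary3p4:
  assumes "\<forall>t::nat. t \<ge> 1 \<longrightarrow>
     (\<Sum>\<^sub>\<infinity>(i, j)\<in>{(i, j). j \<le> i}. real (h i j t) / 2 ^ (i + j)) \<ge> 1 / 2"
  shows "\<forall>t::nat. t \<ge> 1 \<longrightarrow> c_tilde t \<le> 1 / 2 \<and> 1 / 2 \<le> c_t t"
proof (intro allI impI conjI)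
  fix t :: nat assume t1: "t \<ge> 1"
  note hyp = hypBB[OF assms]
  define Q1 where "Q1 = (\<lambda>d::int. 0 \<le> d)"
  have set1: "{n \<in> {n. bsum n \<le> bsum (n + t)}. n < N} = {n. Q1 (DD t n) \<and> n < N}" for N
    by (auto simp: Q1_def DD_def)
  have c1: "c_t t = lim (\<lambda>N. FF Q1 t N / N)"
    unfolding c_t_def asymp_density_def set1 FF_card ..
  have conv1: "(\<lambda>N. FF Q1 t N / N) \<longlonglongrightarrow> c_t t"
    unfolding c1 using FF_conv convergent_LIMSEQ_iff by blast
  have sub1: "(\<lambda>L. FF Q1 t (2^L) / real ((2::nat)^L)) \<longlonglongrightarrow> c_t t"
    using LIMSEQ_subseq_LIMSEQ[OF conv1 sm2] by (simp add: o_def)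
  have ev1: "\<forall>L\<ge>t. 1/2 \<le> FF Q1 t (2^L) / real ((2::nat)^L)"
  proof (intro allI impI)
    fix L assume "L \<ge> t"
    then have tL: "t \<le> 2^L" using less_exp[of t] power_increasing[of t L "2::nat"] by linarith
    have "FF Q1 t (2^L) = AA L t 0" by (simp add: FF_def ind_def AA_def Q1_def)
    also have "\<dots> \<ge> 2^L * BB (2^L + t - 1) 0" by (rule LA[OF tL])
    finally have a: "2^L * BB (2^L + t - 1) 0 \<le> FF Q1 t (2^L)" .
    have "BB (2^L + t - 1) 0 \<ge> 1/2" using hyp[of "2^L + t"] t1 by simp
    then have "(2::real)^L * (1/2) \<le> 2^L * BB (2^L + t - 1) 0" by (rule mult_left_mono) simp
    with a have "(2::real)^L * (1/2) \<le> FF Q1 t (2^L)" by linarith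
    then have "(2::real)^L / 2 \<le> FF Q1 t (2^L)" by simp
    then show "1/2 \<le> FF Q1 t (2^L) / real ((2::nat)^L)" by (simp add: divide_simps)
  qed
  show "1/2 \<le> c_t t" by (rule LIMSEQ_le_const[OF sub1]) (use ev1 in blast)
  define Q2 where "Q2 = (\<lambda>d::int. 0 < d)"
  have set2: "{n \<in> {n. bsum n < bsum (n + t)}. n < N} = {n. Q2 (DD t n) \<and> n < N}" for N
    by (auto simp: Q2_def DD_def)
  have c2: "c_tilde t = lim (\<lambda>N. FF Q2 t N / N)"
    unfolding c_tilde_def asymp_density_def set2 FF_card ..
  have conv2: "(\<lambda>N. FF Q2 t N / N) \<longlonglongrightarrow> c_tilde t"
    unfolding c2 using FF_conv convergent_LIMSEQ_iff by blast
  have sub2: "(\<lambda>L. FF Q2 t (2^L) / real ((2::nat)^L)) \<longlonglongrightarrow> c_tilde t"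
    using LIMSEQ_subseq_LIMSEQ[OF conv2 sm2] by (simp add: o_def)
  have Y: "(\<lambda>L. 1/2 + 2 * real t * (1/2)^L) \<longlonglongrightarrow> 1/2"
  proof -
    have "(\<lambda>L. 2 * real t * (1/2::real)^L) \<longlonglongrightarrow> 2 * real t * 0"
      by (intro tendsto_mult tendsto_const LIMSEQ_realpow_zero) auto
    then show ?thesis using tendsto_add[OF tendsto_const, of _ 0 sequentially "1/2::real"] by simp
  qed
  have ev2: "\<forall>L\<ge>t. FF Q2 t (2^L) / real ((2::nat)^L) \<le> 1/2 + 2 * real t * (1/2)^L"
  proof (intro allI impI)
    fix L assume "L \<ge> t"
    then have tL: "t < 2^L" using less_exp[of t] power_increasing[of t L "2::nat"] by linarith
    have "FF Q2 t (2^L) + AA' L t 0 = (\<Sum>r<(2::nat)^L. 1)"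
      unfolding FF_def ind_def AA'_def Q2_def sum.distrib[symmetric]
      by (rule sum.cong) auto
    then have s: "FF Q2 t (2^L) = 2^L - AA' L t 0" by simp
    have b: "2^L * BB (2^L - t - 1) 0 - 2 * real t \<le> AA' L t 0" using LB[OF tL, of 0] unfolding minus_zero .
    have "BB (2^L - t - 1) 0 \<ge> 1/2" using hyp[of "2^L - t"] tL by simp
    then have "(2::real)^L * (1/2) \<le> 2^L * BB (2^L - t - 1) 0" by (rule mult_left_mono) simp
    with b s have "FF Q2 t (2^L) \<le> 2^L * (1/2) + 2 * real t" by linarith
    then have F: "FF Q2 t (2^L) \<le> 2^L / 2 + 2 * real t" by simp
    have p: "(0::real) < 2^L" by simp
    have "FF Q2 t (2^L) / 2^L \<le> (2^L / 2 + 2 * real t) / 2^L"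
      using F p by (simp add: divide_right_mono)
    also have "\<dots> = 1/2 + 2 * real t * (1/2)^L" using p by (simp add: field_simps power_one_over)
    finally show "FF Q2 t (2^L) / real ((2::nat)^L) \<le> 1/2 + 2 * real t * (1/2)^L" by simp
  qed
  show "c_tilde t \<le> 1/2" by (rule LIMSEQ_le[OF sub2 Y]) (use ev2 in blast)
qed


end
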